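(* The graded linear map $\mathsf{IG}(q^{-1})\to\mathsf{cf}(\mathrm{UT}_\bullet)$ defined by $\mathrm{inc}(\pi)\mapsto\overline{\delta}_\pi$ for $\pi\in\mathcal{NO}_n$, $n\ge0$, is an injective Hopf algebra homomorphism.
   Context: Fix the finite field $\mathbb{F}_q$; $[n]=\{1,\dots,n\}$. $\mathrm{UT}_n$ is the group of $n\times n$ unipotent upper triangular matrices over $\mathbb{F}_q$. A natural unit interval order of $[n]$ is a partial order $\pi\subseteq[n]\times[n]$ (reflexive, antisymmetric, transitive relation) with $(i,j)\in\pi\Rightarrow i\le j$, such that for every $(j,k)\in\pi$ with $j\ne k$, all $(i,l)$ with $i\le j$ and $k\le l$ lie in $\pi$; $\mathcal{NO}_n$ is the set of these. For such $\pi$, $\mathrm{UT}(\pi)=\{g\in\mathrm{UT}_n:(g-1_n)_{i,j}\ne0\text{ only if }(i,j)\in\pi\}$ (a normal subgroup) and $\overline{\delta}_\pi\in\mathsf{cf}(\mathrm{UT}_n)$ is its indicator function. Hopf algebra $\mathsf{cf}(\mathrm{UT}_\bullet)=\bigoplus_n\mathsf{cf}(\mathrm{UT}_n)$ ($\mathsf{cf}$ = complex class functions): for $I\subseteq[n]$, $I^c=[n]\setminus I$, let $\mathrm{UL}_I=\{g\in\mathrm{UT}_n:(g-1_n)_{i,j}\ne0\text{ only if }(i,j)\in I\times I\cup I^c\times I^c\}$, $\mathrm{UR}_I=\{g:(g-1_n)_{i,j}\ne0\text{ only if }(i,j)\in I\times I^c\}$, $\mathrm{UP}_I=\{g:(g-1_n)_{i,j}=0\text{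 for }(i,j)\in I^c\times I\}=\mathrm{UL}_I\ltimes\mathrm{UR}_I$ ($\mathrm{UP}_{[i]}=\mathrm{UT}_n$). With $\mathrm{cano}_I:I\to[|I|]$ order-preserving, $\mathrm{UL}_I\cong\mathrm{UT}_{|I|}\times\mathrm{UT}_{|I^c|}$ by relabelling blocks, inducing $\mathrm{st}_{(I,I^c)}:\mathsf{cf}(\mathrm{UL}_I)\to\mathsf{cf}(\mathrm{UT}_{|I|})\otimes\mathsf{cf}(\mathrm{UT}_{|I^c|})$. Product $\mu=\bigoplus_{n\ge i\ge0}\mathrm{Inf}^{\mathrm{UT}_n}_{\mathrm{UL}_{[i]}}\circ\mathrm{st}^{-1}_{([i],[i]^c)}$ with $\mathrm{Inf}\psi(lr)=\psi(l)$; coproduct $\Delta=\bigoplus_n\sum_{I\subseteq[n]}\mathrm{st}_{(I,I^c)}\circ\mathrm{Def}^{\mathrm{UP}_I}_{\mathrm{UL}_I}\circ\mathrm{Res}^{\mathrm{UT}_n}_{\mathrm{UP}_I}$ with $\mathrm{Def}\psi(g)=\frac1{|\mathrm{UR}_I|}\sum_{x\in\mathrm{UR}_I}\psi(gx)$. Guay-Paquet's Hopf algebra $\mathsf{IG}(t)=\bigoplus_n\mathsf{IG}_n(t)$ is the free graded $\mathbb{C}[t]$-module with basis $\{\mathrm{inc}(\pi):\pi\in\mathcal{NO}_n\}$ in degree $n$ (formal symbols for incomparability graphs). For $\pi\in\mathcal{NO}_n,\rho\in\mathcal{NO}_m$, the shifted ordinal sum is $\pi\star_n\rho=\pi\sqcup\rho'\sqcup([n]\times([n+m]\setminus[n]))$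 with $\rho'=\{(i+n,j+n):(i,j)\in\rho\}$. For $I\subseteq[n]$, $\pi|^{sh}_I=\{(\mathrm{cano}_I(i),\mathrm{cano}_I(j)):(i,j)\in\pi, i,j\in I\}\in\mathcal{NO}_{|I|}$, and $\mathrm{asc}_I(\pi)=|\{(i,j)\in I\times I^c: i<j,(i,j)\notin\pi\}|$. Product: $\mu(\mathrm{inc}(\pi)\otimes\mathrm{inc}(\rho))=\mathrm{inc}(\pi\star_n\rho)$; coproduct: $\Delta(\mathrm{inc}(\pi))=\sum_{I\subseteq[n]}t^{\mathrm{asc}_I(\pi)}\mathrm{inc}(\pi|^{sh}_I)\otimes\mathrm{inc}(\pi|^{sh}_{I^c})$, both $\mathbb{C}[t]$-linear; this is a graded connected $\mathbb{C}[t]$-Hopf algebra, and $\mathsf{IG}(q^{-1})$ is the $\mathbb{C}$-Hopf algebra obtained by setting $t=q^{-1}$. *)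

theory Defs
  imports Complex_Main
begin

text \<open>Matrices over a field are functions on index pairs; an n x n matrix uses indices 1..n
  and is zero outside that range.\<close>
type_synonym 'a mat = "nat \<Rightarrow> nat \<Rightarrow> 'a"

definition mmul :: "nat \<Rightarrow> 'a::field mat \<Rightarrow> 'a mat \<Rightarrow> 'a mat" where
  "mmul N g h = (\<lambda>i j. \<Sum>k\<in>{1..N}. g i k * h k j)"

definition UT :: "nat \<Rightarrow> 'a::field mat set" where
  "UT n = {g. (\<forall>i j. g i j \<noteq> 0 \<longrightarrow> i \<in> {1..n} \<and> j \<in> {1..n} \<and> i \<le> j)
              \<and> (\<forall>i\<in>{1..n}. g i i = 1)}"

definition cf :: "nat \<Rightarrow> ('a::field mat \<Rightarrow> complex) set" where
  "cf n = {f. (\<forall>g. g \<notin> UT n \<longrightarrow> f g = 0) \<and>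
             (\<forall>g\<in>UT n. \<forall>h\<in>UT n. \<forall>x\<in>UT n. mmul n h g = mmul n x h \<longrightarrow> f g = f x)}"

definition NO :: "nat \<Rightarrow> (nat \<times> nat) set set" where
  "NO n = {\<pi>. \<pi> \<subseteq> {1..n} \<times> {1..n} \<and> (\<forall>i\<in>{1..n}. (i, i) \<in> \<pi>)
             \<and> antisym \<pi> \<and> trans \<pi> \<and> (\<forall>(i, j)\<in>\<pi>. i \<le> j)
             \<and> (\<forall>(j, k)\<in>\<pi>. j \<noteq> k \<longrightarrow>
                   (\<forall>i l. 1 \<le> i \<and> i \<le> j \<and> k \<le> l \<and> l \<le> n \<longrightarrow> (i, l) \<in> \<pi>))}"

definition delta :: "nat \<Rightarrow> (nat \<times> nat) set \<Rightarrow> 'a::field mat \<Rightarrow> complex" where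
  "delta n \<pi> g = (if g \<in> UT n \<and> (\<forall>i j. i \<noteq> j \<longrightarrow> g i j \<noteq> 0 \<longrightarrow> (i, j) \<in> \<pi>) then 1 else 0)"

definition cano :: "nat set \<Rightarrow> nat \<Rightarrow> nat" where
  "cano I i = card {k\<in>I. k \<le> i}"

text \<open>The inverse of the relabelling isomorphism UL_I = UT_|I| x UT_|I^c| (on elements):
  put x into the I x I block and y into the I^c x I^c block.\<close>
definition embed :: "nat \<Rightarrow> nat set \<Rightarrow> 'a::field mat \<Rightarrow> 'a mat \<Rightarrow> 'a mat" where
  "embed n I x y = (\<lambda>i j.
     if i \<in> I \<and> j \<in> I then x (cano I i) (cano I j)
     else if i \<in> {1..n} - I \<and> j \<in> {1..n} - I
       then y (cano ({1..n} - I) i) (cano ({1..n} - I) j)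
     else 0)"

definition UR :: "nat \<Rightarrow> nat set \<Rightarrow> 'a::field mat set" where
  "UR n I = {g \<in> UT n. \<forall>i j. i \<noteq> j \<longrightarrow> g i j \<noteq> 0 \<longrightarrow> i \<in> I \<and> j \<in> {1..n} - I}"

text \<open>Product of cf(UT_bullet) on cf(UT_n) (x) cf(UT_m), where an element of the tensor product
  is represented as a function on UT_n x UT_m: Inf^{UT_(n+m)}_{UL_[n]} o st^{-1}.\<close>
definition cf_mult :: "nat \<Rightarrow> nat \<Rightarrow> ('a::field mat \<Rightarrow> 'a mat \<Rightarrow> complex) \<Rightarrow> 'a mat \<Rightarrow> complex" where
  "cf_mult n m F g =
     (\<Sum>x\<in>UT n. \<Sum>y\<in>UT m. \<Sum>r\<in>UR (n + m) {1..n}.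
        if g = mmul (n + m) (embed (n + m) {1..n} x y) r then F x y else 0)"

text \<open>Component in cf(UT_a) (x) cf(UT_(n-a)) (as a function on UT_a x UT_(n-a)) of the
  coproduct of chi in cf(UT_n): sum over |I| = a of st o Def o Res.\<close>
definition cf_coprod :: "nat \<Rightarrow> nat \<Rightarrow> ('a::field mat \<Rightarrow> complex) \<Rightarrow> 'a mat \<Rightarrow> 'a mat \<Rightarrow> complex" where
  "cf_coprod n a \<chi> x y =
     (\<Sum>I\<in>{I. I \<subseteq> {1..n} \<and> card I = a}.
        (1 / of_nat (card (UR n I :: 'a mat set))) *
        (\<Sum>r\<in>UR n I. \<chi> (mmul n (embed n I x y) r)))"

definition ordsum :: "nat \<Rightarrow> nat \<Rightarrow> (nat \<times> nat) set \<Rightarrow> (nat \<times> nat) set \<Rightarrow> (nat \<times> nat) set" where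
  "ordsum n m \<pi> \<rho> = \<pi> \<union> {(i + n, j + n) | i j. (i, j) \<in> \<rho>} \<union> ({1..n} \<times> ({1..n + m} - {1..n}))"

definition restr_sh :: "nat set \<Rightarrow> (nat \<times> nat) set \<Rightarrow> (nat \<times> nat) set" where
  "restr_sh I \<pi> = {(cano I i, cano I j) | i j. (i, j) \<in> \<pi> \<and> i \<in> I \<and> j \<in> I}"

definition asc :: "nat \<Rightarrow> nat set \<Rightarrow> (nat \<times> nat) set \<Rightarrow> nat" where
  "asc n I \<pi> = card {(i, j). i \<in> I \<and> j \<in> {1..n} - I \<and> i < j \<and> (i, j) \<notin> \<pi>}"

text \<open>The graded linear map IG(q^{-1}) -> cf(UT_bullet), inc(pi) |-> delta_pi, applied to an
  element of IG(q^{-1}) given by its coefficient function c on basis elements (n, pi);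
  the result is the family of its homogeneous components.\<close>
definition phi :: "(nat \<times> (nat \<times> nat) set \<Rightarrow> complex) \<Rightarrow> nat \<Rightarrow> 'a::field mat \<Rightarrow> complex" where
  "phi c n g = (\<Sum>\<pi>\<in>NO n. c (n, \<pi>) * delta n \<pi> g)"

definition IG_elems :: "(nat \<times> (nat \<times> nat) set \<Rightarrow> complex) set" where
  "IG_elems = {c. finite {k. c k \<noteq> 0} \<and> (\<forall>k. c k \<noteq> 0 \<longrightarrow> snd k \<in> NO (fst k))}"

end

theory Submission
  imports Defs "HOL-Library.FuncSet"
begin

lemma UT_zero: "g \<in> UT n \<Longrightarrow> \<not>(i \<in> {1..n} \<and> j \<in> {1..n} \<and> i \<le> j) \<Longrightarrow> g i j = 0"
  by (auto simp: UT_def)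

lemma UT_nz: "g \<in> UT n \<Longrightarrow> g i j \<noteq> 0 \<Longrightarrow> 1 \<le> i \<and> i \<le> j \<and> j \<le> n"
  by (auto simp: UT_def)

lemma UT_diag: "g \<in> UT n \<Longrightarrow> 1 \<le> i \<Longrightarrow> i \<le> n \<Longrightarrow> g i i = 1"
  by (auto simp: UT_def)

lemma UT_I: "(\<And>i j. g i j \<noteq> 0 \<Longrightarrow> 1 \<le> i \<and> i \<le> j \<and> j \<le> n) \<Longrightarrow> (\<And>i. 1 \<le> i \<Longrightarrow> i \<le> n \<Longrightarrow> g i i = 1) \<Longrightarrow> g \<in> UT n"
  by (auto simp: UT_def) (meson order_trans)+

lemma mmul_nz: "mmul N g h i j \<noteq> 0 \<Longrightarrow> \<exists>k\<in>{1..N}. g i k \<noteq> 0 \<and> h k j \<noteq> 0"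
  unfolding mmul_def by (metis (mono_tags, lifting) mult_eq_0_iff sum.neutral)

lemma mmul_split:
  assumes "i \<in> {1..N}"
  shows "mmul N g h i j = g i i * h i j + (\<Sum>k\<in>{1..N}-{i}. g i k * h k j)"
  unfolding mmul_def using assms by (simp add: sum.remove)

lemma mmul_UT: assumes g: "g \<in> UT N" and h: "h \<in> UT N" shows "mmul N g h \<in> UT N"
proof (rule UT_I)
  fix i j assume "mmul N g h i j \<noteq> 0"
  then obtain k where "k \<in> {1..N}" "g i k \<noteq> 0" "h k j \<noteq> 0" using mmul_nz by blast
  then show "1 \<le> i \<and> i \<le> j \<and> j \<le> N" using UT_nz[OF g] UT_nz[OF h] by fastforce
next
  fix i assume i: "1 \<le> i" "i \<le> N"
  have "(\<Sum>k\<in>{1..N}-{i}. g i k * h k i) = 0"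
  proof (rule sum.neutral, rule ballI)
    fix k assume "k \<in> {1..N}-{i}"
    then show "g i k * h k i = 0" using UT_nz[OF g, of i k] UT_nz[OF h, of k i] by force
  qed
  then show "mmul N g h i i = 1" using mmul_split[of i N g h i] i UT_diag[OF g i] UT_diag[OF h i] by simp
qed

lemma finite_UT: "finite (UT n :: 'a::{finite,field} mat set)"
proof -
  let ?S = "{f :: nat \<times> nat \<Rightarrow> 'a. \<forall>x. (x \<in> {1..n}\<times>{1..n} \<longrightarrow> f x \<in> UNIV) \<and> (x \<notin> {1..n}\<times>{1..n} \<longrightarrow> f x = 0)}"
  have "finite ?S" by (rule finite_set_of_finite_funs) auto
  moreover have "UT n \<subseteq> curry ` ?S"
  proof
    fix g :: "'a mat" assume g: "g \<in> UT n"
    have "g = curry (case_prod g)" by simp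
    moreover have "case_prod g \<in> ?S" using UT_zero[OF g] by auto
    ultimately show "g \<in> curry ` ?S" by blast
  qed
  ultimately show ?thesis using finite_subset by blast
qed

lemma cano_mono: "finite I \<Longrightarrow> j \<in> I \<Longrightarrow> i < j \<Longrightarrow> cano I i < cano I j"
  unfolding cano_def by (rule psubset_card_mono) (auto, metis leD mem_Collect_eq order_refl)

lemma cano_range: "finite I \<Longrightarrow> i \<in> I \<Longrightarrow> cano I i \<in> {1..card I}"
proof -
  assume f: "finite I" and i: "i \<in> I"
  have "{k\<in>I. k \<le> i} \<noteq> {}" using i by auto
  moreover have "finite {k\<in>I. k \<le> i}" using f by auto
  ultimately have "card {k\<in>I. k \<le> i} \<ge> 1" by (simp add: Suc_leI card_gt_0_iff)
  moreover have "card {k\<in>I. k \<le> i} \<le> card I" using f by (intro card_mono) auto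
  ultimately show ?thesis unfolding cano_def by simp
qed

lemma cano_inj: "finite I \<Longrightarrow> inj_on (cano I) I"
  by (metis cano_mono inj_on_def less_irrefl linorder_neqE_nat)

lemma cano_bij: "finite I \<Longrightarrow> bij_betw (cano I) I {1..card I}"
  unfolding bij_betw_def
  by (metis cano_inj cano_range card_atLeastAtMost card_image card_subset_eq diff_Suc_1 finite_atLeastAtMost image_subsetI)

lemma cano_le_iff: "finite I \<Longrightarrow> i \<in> I \<Longrightarrow> j \<in> I \<Longrightarrow> cano I i \<le> cano I j \<longleftrightarrow> i \<le> j"
  by (metis cano_mono leD leI le_eq_less_or_eq)


definition idm :: "nat \<Rightarrow> nat \<Rightarrow> nat \<Rightarrow> 'a::field" where
  "idm N i j = (if i = j \<and> i \<in> {1..N} then 1 else 0)"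

definition Mset :: "nat \<Rightarrow> (nat \<times> nat) set \<Rightarrow> 'a::field mat set" where
  "Mset N S = {g. \<forall>i j. (i, j) \<notin> S \<longrightarrow> g i j = idm N i j}"

lemma card_Mset:
  assumes S: "finite S"
  shows "card (Mset N S :: 'a::{finite,field} mat set) = card (UNIV :: 'a set) ^ card S"
proof -
  let ?f = "\<lambda>g::'a mat. restrict (\<lambda>p. g (fst p) (snd p)) S"
  let ?g = "\<lambda>f i j. if (i, j) \<in> S then f (i, j) else (idm N i j :: 'a)"
  have "bij_betw ?f (Mset N S) (S \<rightarrow>\<^sub>E (UNIV :: 'a set))"
  proof (rule bij_betw_byWitness[where f' = ?g])
    show "\<forall>a\<in>Mset N S. ?g (?f a) = a" by (auto simp: Mset_def fun_eq_iff)
    show "\<forall>a'\<in>S \<rightarrow>\<^sub>E UNIV. ?f (?g a') = a'" by (auto simp: fun_eq_iff PiE_def extensional_def)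
    show "?f ` Mset N S \<subseteq> S \<rightarrow>\<^sub>E UNIV" by auto
    show "?g ` (S \<rightarrow>\<^sub>E UNIV) \<subseteq> Mset N S" by (auto simp: Mset_def)
  qed
  then have "card (Mset N S :: 'a mat set) = card (S \<rightarrow>\<^sub>E (UNIV :: 'a set))" by (rule bij_betw_same_card)
  also have "\<dots> = card (UNIV :: 'a set) ^ card S" by (rule card_funcsetE[OF S])
  finally show ?thesis .
qed

definition Pos :: "nat \<Rightarrow> nat set \<Rightarrow> (nat \<times> nat) set" where
  "Pos N I = {(i, j). i \<in> I \<and> j \<in> {1..N} - I \<and> i < j}"

lemma finite_Pos: "finite (Pos N I)"
proof -
  have "Pos N I \<subseteq> {0..N} \<times> {1..N}" by (auto simp: Pos_def)
  then show ?thesis by (rule finite_subset) auto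
qed

lemma UR_Mset: "I \<subseteq> {1..N} \<Longrightarrow> UR N I = Mset N (Pos N I)"
proof (intro set_eqI iffI)
  fix g :: "'a mat" assume I: "I \<subseteq> {1..N}" and g: "g \<in> UR N I"
  then have gU: "g \<in> UT N" and gs: "\<And>i j. i \<noteq> j \<Longrightarrow> g i j \<noteq> 0 \<Longrightarrow> i \<in> I \<and> j \<in> {1..N} - I" by (auto simp: UR_def)
  show "g \<in> Mset N (Pos N I)" unfolding Mset_def
  proof (intro CollectI allI impI)
    fix i j assume ij: "(i, j) \<notin> Pos N I"
    show "g i j = idm N i j"
    proof (cases "i = j")
      case True then show ?thesis using UT_diag[OF gU] UT_zero[OF gU] by (auto simp: idm_def)
    next
      case False
      then have "g i j = 0" using gs[of i j] UT_nz[OF gU, of i j] ij by (force simp: Pos_def)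
      then show ?thesis using False by (simp add: idm_def)
    qed
  qed
next
  fix g :: "'a mat" assume I: "I \<subseteq> {1..N}" and g: "g \<in> Mset N (Pos N I)"
  then have g': "\<And>i j. (i, j) \<notin> Pos N I \<Longrightarrow> g i j = idm N i j" by (auto simp: Mset_def)
  have nz: "g i j \<noteq> 0 \<Longrightarrow> (i, j) \<in> Pos N I \<or> (i = j \<and> i \<in> {1..N})" for i j
    using g'[of i j] by (auto simp: idm_def split: if_splits)
  have "g \<in> UT N"
  proof (rule UT_I)
    fix i j assume "g i j \<noteq> 0" then show "1 \<le> i \<and> i \<le> j \<and> j \<le> N" using nz[of i j] I by (auto simp: Pos_def)
  next
    fix i assume "1 \<le> i" "i \<le> N" then show "g i i = 1" using g'[of i i] by (auto simp: Pos_def idm_def)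
  qed
  then show "g \<in> UR N I" unfolding UR_def using nz by (auto simp: Pos_def)
qed

lemma finite_UR: "finite (UR N I :: 'a::{finite,field} mat set)"
  by (rule finite_subset[OF _ finite_UT[of N]]) (auto simp: UR_def)

lemma UR_UT: "r \<in> UR N I \<Longrightarrow> r \<in> UT N" by (auto simp: UR_def)

lemma UR_nz: "r \<in> UR N I \<Longrightarrow> i \<noteq> j \<Longrightarrow> r i j \<noteq> 0 \<Longrightarrow> i \<in> I \<and> j \<in> {1..N} - I" by (auto simp: UR_def)

definition BD :: "'a::field mat \<Rightarrow> nat set \<Rightarrow> bool" where
  "BD l I = (\<forall>i j. l i j \<noteq> 0 \<longrightarrow> (i \<in> I \<longleftrightarrow> j \<in> I))"

definition psi :: "nat \<Rightarrow> nat set \<Rightarrow> 'a::field mat \<Rightarrow> 'a mat \<Rightarrow> 'a mat" where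
  "psi N I l r = (\<lambda>i j. if i \<in> I \<and> j \<in> {1..N} - I then mmul N l r i j else r i j)"

lemma mmul_split_col:
  assumes "j \<in> {1..N}"
  shows "mmul N g h i j = g i j * h j j + (\<Sum>k\<in>{1..N}-{j}. g i k * h k j)"
  unfolding mmul_def using assms by (simp add: sum.remove)

lemma mmul_nonblk:
  assumes l: "l \<in> UT N" "BD l I" and r: "r \<in> UR N I" and nb: "\<not> (i \<in> I \<and> j \<in> {1..N} - I)"
  shows "mmul N l r i j = l i j"
proof (cases "j \<in> {1..N}")
  case True
  have "(\<Sum>k\<in>{1..N}-{j}. l i k * r k j) = 0"
  proof (rule sum.neutral, rule ballI)
    fix k assume k: "k \<in> {1..N}-{j}"
    show "l i k * r k j = 0"
    proof (rule ccontr)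
      assume "l i k * r k j \<noteq> 0"
      then have "l i k \<noteq> 0" "r k j \<noteq> 0" by auto
      then show False using UR_nz[OF r, of k j] k l(2) nb unfolding BD_def by blast
    qed
  qed
  then show ?thesis using mmul_split_col[OF True, of l r i] UT_diag[OF UR_UT[OF r], of j] True by simp
next
  case False
  then have "mmul N l r i j = 0" using UT_nz[OF mmul_UT[OF l(1) UR_UT[OF r]], of i j] by force
  moreover have "l i j = 0" using UT_nz[OF l(1), of i j] False by force
  ultimately show ?thesis by simp
qed

lemma psi_UR:
  assumes I: "I \<subseteq> {1..N}" and l: "l \<in> UT N" and r: "r \<in> UR N I"
  shows "psi N I l r \<in> UR N I"
proof -
  have rm: "r \<in> Mset N (Pos N I)" using r UR_Mset[OF I] by blast
  have "psi N I l r \<in> Mset N (Pos N I)" unfolding Mset_def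
  proof (intro CollectI allI impI)
    fix i j assume ij: "(i, j) \<notin> Pos N I"
    show "psi N I l r i j = idm N i j"
    proof (cases "i \<in> I \<and> j \<in> {1..N} - I")
      case True
      then have "\<not> i \<le> j" "i \<noteq> j" using ij by (auto simp: Pos_def)
      then have "mmul N l r i j = 0" using UT_nz[OF mmul_UT[OF l UR_UT[OF r]], of i j] by blast
      then show ?thesis using True \<open>i \<noteq> j\<close> by (simp add: psi_def idm_def)
    next
      case False then show ?thesis using rm ij unfolding psi_def Mset_def by auto
    qed
  qed
  then show ?thesis using UR_Mset[OF I] by blast
qed

lemma psi_inj:
  assumes I: "I \<subseteq> {1..N}" and l: "l \<in> UT N"
  shows "inj_on (psi N I l) (UR N I)"
proof (rule inj_onI)
  fix r r' assume r: "r \<in> UR N I" and r': "r' \<in> UR N I" and eq: "psi N I l r = psi N I l r'"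
  have "\<forall>j. r i j = r' i j" for i
  proof (induction "N - i" arbitrary: i rule: less_induct)
    case less
    show ?case
    proof
      fix j
      show "r i j = r' i j"
      proof (cases "i \<in> I \<and> j \<in> {1..N} - I")
        case False
        then show ?thesis using fun_cong[OF fun_cong[OF eq, of i], of j] unfolding psi_def by auto
      next
        case True
        then have iN: "i \<in> {1..N}" using I by auto
        have m: "mmul N l r i j = mmul N l r' i j" using fun_cong[OF fun_cong[OF eq, of i], of j] True by (simp add: psi_def)
        have s: "(\<Sum>k\<in>{1..N}-{i}. l i k * r k j) = (\<Sum>k\<in>{1..N}-{i}. l i k * r' k j)"
        proof (rule sum.cong[OF refl])
          fix k assume k: "k \<in> {1..N}-{i}"
          show "l i k * r k j = l i k * r' k j"
          proof (cases "l i k = 0")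
            case False
            then have "i < k" using UT_nz[OF l, of i k] k by auto
            then have "N - k < N - i" using k by auto
            then show ?thesis using less by auto
          qed simp
        qed
        show ?thesis using m mmul_split[OF iN, of l r j] mmul_split[OF iN, of l r' j] s UT_diag[OF l] iN by simp
      qed
    qed
  qed
  then show "r = r'" by (auto simp: fun_eq_iff)
qed

lemma psi_surj:
  assumes I: "I \<subseteq> {1..N}" and l: "l \<in> UT N"
  shows "psi N I l ` (UR N I :: 'a::{finite,field} mat set) = UR N I"
  by (rule endo_inj_surj[OF finite_UR _ psi_inj[OF I l]]) (use psi_UR[OF I l] in blast)

lemma mmul_psi:
  assumes I: "I \<subseteq> {1..N}" and l: "l \<in> UT N" "BD l I" and r: "r \<in> UR N I"
  shows "mmul N l r i j = (if i \<in> I \<and> j \<in> {1..N} - I then psi N I l r i j else l i j)"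
  using mmul_nonblk[OF l r] by (simp add: psi_def)




lemma card_compl: "I \<subseteq> {1..N} \<Longrightarrow> card ({1..N} - I) = N - card I"
  by (simp add: card_Diff_subset finite_subset)

lemma embed_UT:
  assumes I: "I \<subseteq> {1..N}" and x: "x \<in> UT (card I)" and y: "y \<in> UT (N - card I)"
  shows "embed N I x y \<in> UT N" "BD (embed N I x y) I"
proof -
  let ?C = "{1..N} - I"
  have fI: "finite I" using I finite_subset by blast
  have fC: "finite ?C" by simp
  have cC: "card ?C = N - card I" using card_compl[OF I] .
  show "embed N I x y \<in> UT N"
  proof (rule UT_I)
    fix i j assume nz: "embed N I x y i j \<noteq> 0"
    show "1 \<le> i \<and> i \<le> j \<and> j \<le> N"
    proof (cases "i \<in> I \<and> j \<in> I")
      case True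
      then have "x (cano I i) (cano I j) \<noteq> 0" using nz by (simp add: embed_def)
      then have "cano I i \<le> cano I j" using UT_nz[OF x] by blast
      then show ?thesis using True cano_le_iff[OF fI] I by auto
    next
      case False
      then have b: "i \<in> ?C \<and> j \<in> ?C" "y (cano ?C i) (cano ?C j) \<noteq> 0" using nz by (auto simp: embed_def split: if_splits)
      then have "cano ?C i \<le> cano ?C j" using UT_nz[OF y] by blast
      then show ?thesis using b cano_le_iff[OF fC] by auto
    qed
  next
    fix i assume i: "1 \<le> i" "i \<le> N"
    show "embed N I x y i i = 1"
    proof (cases "i \<in> I")
      case True
      then show ?thesis using cano_range[OF fI True] UT_diag[OF x] by (simp add: embed_def)
    next
      case False
      then have iC: "i \<in> ?C" using i by auto
      then show ?thesis using cano_range[OF fC iC] UT_diag[OF y] cC False by (simp add: embed_def)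
    qed
  qed
  show "BD (embed N I x y) I" unfolding BD_def embed_def by auto
qed

definition pat :: "(nat \<times> nat) set \<Rightarrow> 'a::field mat \<Rightarrow> bool" where
  "pat \<pi> h = (\<forall>i j. i \<noteq> j \<longrightarrow> h i j \<noteq> 0 \<longrightarrow> (i, j) \<in> \<pi>)"

lemma delta_pat: "delta n \<pi> g = (if g \<in> UT n \<and> pat \<pi> g then 1 else 0)"
  by (simp add: delta_def pat_def)

lemma pat_block:
  assumes fJ: "finite J" and x: "x \<in> UT (card J)"
  shows "(\<forall>i\<in>J. \<forall>j\<in>J. i \<noteq> j \<longrightarrow> x (cano J i) (cano J j) \<noteq> 0 \<longrightarrow> (i, j) \<in> \<pi>) \<longleftrightarrow> pat (restr_sh J \<pi>) x"
proof
  assume L: "\<forall>i\<in>J. \<forall>j\<in>J. i \<noteq> j \<longrightarrow> x (cano J i) (cano J j) \<noteq> 0 \<longrightarrow> (i, j) \<in> \<pi>"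
  show "pat (restr_sh J \<pi>) x" unfolding pat_def
  proof (intro allI impI)
    fix i' j' assume ne: "i' \<noteq> j'" and nz: "x i' j' \<noteq> 0"
    then have "i' \<in> {1..card J}" "j' \<in> {1..card J}" using UT_nz[OF x nz] by auto
    then obtain i j where ij: "i \<in> J" "j \<in> J" "cano J i = i'" "cano J j = j'"
      using cano_bij[OF fJ] unfolding bij_betw_def by (metis imageE)
    have "x (cano J i) (cano J j) \<noteq> 0" using nz ij by simp
    moreover have "i \<noteq> j" using ne ij by auto
    ultimately have "(i, j) \<in> \<pi>" using L ij(1,2) by blast
    then have "(cano J i, cano J j) \<in> restr_sh J \<pi>" unfolding restr_sh_def using ij(1,2) by blast
    then show "(i', j') \<in> restr_sh J \<pi>" using ij by simp
  qed
next
  assume R: "pat (restr_sh J \<pi>) x"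
  show "\<forall>i\<in>J. \<forall>j\<in>J. i \<noteq> j \<longrightarrow> x (cano J i) (cano J j) \<noteq> 0 \<longrightarrow> (i, j) \<in> \<pi>"
  proof (intro ballI impI)
    fix i j assume ij: "i \<in> J" "j \<in> J" "i \<noteq> j" "x (cano J i) (cano J j) \<noteq> 0"
    have inj: "inj_on (cano J) J" by (rule cano_inj[OF fJ])
    then have "cano J i \<noteq> cano J j" using inj_onD[OF inj _ ij(1) ij(2)] ij(3) by blast
    then have "(cano J i, cano J j) \<in> restr_sh J \<pi>" using R ij unfolding pat_def by blast
    then obtain i2 j2 where o: "(i2, j2) \<in> \<pi>" "i2 \<in> J" "j2 \<in> J" "cano J i = cano J i2" "cano J j = cano J j2"
      unfolding restr_sh_def by blast
    have "i = i2" using inj_onD[OF inj o(4) ij(1) o(2)] .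
    moreover have "j = j2" using inj_onD[OF inj o(5) ij(2) o(3)] .
    ultimately show "(i, j) \<in> \<pi>" using o(1) by simp
  qed
qed

lemma pat_embed:
  assumes I: "I \<subseteq> {1..N}" and x: "x \<in> UT (card I)" and y: "y \<in> UT (N - card I)"
  shows "pat \<pi> (embed N I x y) \<longleftrightarrow> pat (restr_sh I \<pi>) x \<and> pat (restr_sh ({1..N} - I) \<pi>) y"
proof -
  let ?C = "{1..N} - I"
  have fI: "finite I" using I finite_subset by blast
  have y': "y \<in> UT (card ?C)" using y card_compl[OF I] by simp
  have "pat \<pi> (embed N I x y) \<longleftrightarrow>
     (\<forall>i\<in>I. \<forall>j\<in>I. i \<noteq> j \<longrightarrow> x (cano I i) (cano I j) \<noteq> 0 \<longrightarrow> (i, j) \<in> \<pi>) \<and>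
     (\<forall>i\<in>?C. \<forall>j\<in>?C. i \<noteq> j \<longrightarrow> y (cano ?C i) (cano ?C j) \<noteq> 0 \<longrightarrow> (i, j) \<in> \<pi>)"
  proof -
    have e1: "embed N I x y i j = x (cano I i) (cano I j)" if "i \<in> I" "j \<in> I" for i j
      using that by (simp add: embed_def)
    have e2: "embed N I x y i j = y (cano ?C i) (cano ?C j)" if "i \<in> ?C" "j \<in> ?C" for i j
      using that by (simp add: embed_def)
    have e3: "embed N I x y i j = 0" if "\<not> (i \<in> I \<and> j \<in> I)" "\<not> (i \<in> ?C \<and> j \<in> ?C)" for i j
      using that unfolding embed_def by presburger
    show ?thesis
    proof
      assume P: "pat \<pi> (embed N I x y)"
      show "(\<forall>i\<in>I. \<forall>j\<in>I. i \<noteq> j \<longrightarrow> x (cano I i) (cano I j) \<noteq> 0 \<longrightarrow> (i, j) \<in> \<pi>) \<and>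
     (\<forall>i\<in>?C. \<forall>j\<in>?C. i \<noteq> j \<longrightarrow> y (cano ?C i) (cano ?C j) \<noteq> 0 \<longrightarrow> (i, j) \<in> \<pi>)"
      proof (intro conjI ballI impI)
        fix i j assume a: "i \<in> I" "j \<in> I" "i \<noteq> j" "x (cano I i) (cano I j) \<noteq> 0"
        then have "embed N I x y i j \<noteq> 0" using e1 by simp
        then show "(i, j) \<in> \<pi>" using P[unfolded pat_def] a(3) by blast
      next
        fix i j assume a: "i \<in> ?C" "j \<in> ?C" "i \<noteq> j" "y (cano ?C i) (cano ?C j) \<noteq> 0"
        then have "embed N I x y i j \<noteq> 0" using e2 by simp
        then show "(i, j) \<in> \<pi>" using P[unfolded pat_def] a(3) by blast
      qed
    next
      assume Q: "(\<forall>i\<in>I. \<forall>j\<in>I. i \<noteq> j \<longrightarrow> x (cano I i) (cano I j) \<noteq> 0 \<longrightarrow> (i, j) \<in> \<pi>) \<and>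
     (\<forall>i\<in>?C. \<forall>j\<in>?C. i \<noteq> j \<longrightarrow> y (cano ?C i) (cano ?C j) \<noteq> 0 \<longrightarrow> (i, j) \<in> \<pi>)"
      show "pat \<pi> (embed N I x y)" unfolding pat_def
      proof (intro allI impI)
        fix i j assume "i \<noteq> j" "embed N I x y i j \<noteq> 0"
        then show "(i, j) \<in> \<pi>" using Q e1[of i j] e2[of i j] e3[of i j] by metis
      qed
    qed
  qed
  also have "\<dots> \<longleftrightarrow> pat (restr_sh I \<pi>) x \<and> pat (restr_sh ?C \<pi>) y"
    using pat_block[OF fI x] pat_block[OF _ y'] by simp
  finally show ?thesis .
qed


lemma sum_if_card: "finite A \<Longrightarrow> (\<Sum>x\<in>A. if P x then 1 else 0) = (of_nat (card {x\<in>A. P x}) :: 'b::semiring_1)"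
  by (simp add: sum.inter_filter[symmetric])

lemma Mset_pat:
  assumes I: "I \<subseteq> {1..N}"
  shows "{s \<in> UR N I. pat \<pi> s} = (Mset N (Pos N I \<inter> \<pi>) :: 'a::field mat set)"
proof (intro set_eqI iffI)
  fix s :: "'a mat" assume "s \<in> {s \<in> UR N I. pat \<pi> s}"
  then have s: "s \<in> Mset N (Pos N I)" "pat \<pi> s" using UR_Mset[OF I] by auto
  show "s \<in> Mset N (Pos N I \<inter> \<pi>)" unfolding Mset_def
  proof (intro CollectI allI impI)
    fix i j assume ij: "(i, j) \<notin> Pos N I \<inter> \<pi>"
    show "s i j = idm N i j"
    proof (cases "(i, j) \<in> Pos N I")
      case True
      then have "i \<noteq> j" "(i, j) \<notin> \<pi>" using ij by (auto simp: Pos_def)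
      then have "s i j = 0" using s(2) unfolding pat_def by blast
      then show ?thesis using \<open>i \<noteq> j\<close> by (simp add: idm_def)
    next
      case False then show ?thesis using s(1) by (simp add: Mset_def)
    qed
  qed
next
  fix s :: "'a mat" assume s: "s \<in> Mset N (Pos N I \<inter> \<pi>)"
  then have "s \<in> Mset N (Pos N I)" unfolding Mset_def by blast
  moreover have "pat \<pi> s" unfolding pat_def
  proof (intro allI impI)
    fix i j assume "i \<noteq> j" "s i j \<noteq> 0"
    show "(i, j) \<in> \<pi>"
    proof (rule ccontr)
      assume "(i, j) \<notin> \<pi>"
      then have "s i j = idm N i j" using s unfolding Mset_def by blast
      then show False using \<open>i \<noteq> j\<close> \<open>s i j \<noteq> 0\<close> by (simp add: idm_def)
    qed
  qed
  ultimately show "s \<in> {s \<in> UR N I. pat \<pi> s}" using UR_Mset[OF I] by blast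
qed

lemma asc_Pos: "asc n I \<pi> = card (Pos n I - \<pi>)"
  unfolding asc_def Pos_def by (rule arg_cong[where f = card]) auto

lemma coprod_term:
  fixes x y :: "'a::{finite,field} mat"
  assumes I: "I \<subseteq> {1..n}" and x: "x \<in> UT (card I)" and y: "y \<in> UT (n - card I)"
  shows "(1 / of_nat (card (UR n I :: 'a mat set))) * (\<Sum>r\<in>UR n I. (delta n \<pi> (mmul n (embed n I x y) r) :: complex))
     = (1 / of_nat (card (UNIV::'a set))) ^ asc n I \<pi> * delta (card I) (restr_sh I \<pi>) x * delta (n - card I) (restr_sh ({1..n} - I) \<pi>) y"
proof -
  define l where "l = embed n I x y"
  have lU: "l \<in> UT n" and lB: "BD l I" using embed_UT[OF I x y] by (auto simp: l_def)
  define q where "q = card (UNIV :: 'a set)"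
  have q0: "q \<noteq> 0" unfolding q_def by simp
  have pm: "pat \<pi> (mmul n l r) \<longleftrightarrow> pat \<pi> l \<and> pat \<pi> (psi n I l r)" if r: "r \<in> UR n I" for r
  proof -
    have mp: "mmul n l r i j = (if i \<in> I \<and> j \<in> {1..n} - I then psi n I l r i j else l i j)" for i j
      by (rule mmul_psi[OF I lU lB r])
    have l0: "i \<in> I \<and> j \<in> {1..n} - I \<Longrightarrow> l i j = 0" for i j using lB unfolding BD_def by auto
    have p0: "\<not> (i \<in> I \<and> j \<in> {1..n} - I) \<Longrightarrow> i \<noteq> j \<Longrightarrow> psi n I l r i j = 0" for i j
      using UR_nz[OF psi_UR[OF I lU r], of i j] by blast
    show ?thesis
    proof
      assume P: "pat \<pi> (mmul n l r)"
      show "pat \<pi> l \<and> pat \<pi> (psi n I l r)" unfolding pat_def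
      proof (intro conjI allI impI)
        fix i j assume a: "i \<noteq> j" "l i j \<noteq> 0"
        then have nb: "\<not> (i \<in> I \<and> j \<in> {1..n} - I)" using l0[of i j] by blast
        have "mmul n l r i j = l i j" unfolding mp[of i j] by (rule if_not_P[OF nb])
        then show "(i, j) \<in> \<pi>" using P[unfolded pat_def, rule_format, of i j] a by simp
      next
        fix i j assume a: "i \<noteq> j" "psi n I l r i j \<noteq> 0"
        then have "i \<in> I \<and> j \<in> {1..n} - I" using p0[of i j] by blast
        then have "mmul n l r i j = psi n I l r i j" using mp[of i j] by simp
        then show "(i, j) \<in> \<pi>" using P[unfolded pat_def, rule_format, of i j] a by simp
      qed
    next
      assume Q: "pat \<pi> l \<and> pat \<pi> (psi n I l r)"
      show "pat \<pi> (mmul n l r)" unfolding pat_def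
      proof (intro allI impI)
        fix i j assume a: "i \<noteq> j" "mmul n l r i j \<noteq> 0"
        show "(i, j) \<in> \<pi>"
        proof (cases "i \<in> I \<and> j \<in> {1..n} - I")
          case True
          then have "mmul n l r i j = psi n I l r i j" using mp[of i j] by simp
          then show ?thesis using Q[unfolded pat_def] a by metis
        next
          case False
          have "mmul n l r i j = l i j" unfolding mp[of i j] by (rule if_not_P[OF False])
          then show ?thesis using Q[unfolded pat_def] a by metis
        qed
      qed
    qed
  qed
  have fUR: "finite (UR n I :: 'a mat set)" by (rule finite_UR)
  have "(\<Sum>r\<in>UR n I. (delta n \<pi> (mmul n l r) :: complex)) = (\<Sum>r\<in>UR n I. if pat \<pi> l \<and> pat \<pi> (psi n I l r) then 1 else 0)"
    by (rule sum.cong[OF refl]) (simp add: delta_pat mmul_UT[OF lU UR_UT] pm)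
  also have "\<dots> = (if pat \<pi> l then of_nat (card {r \<in> UR n I. pat \<pi> (psi n I l r)}) else 0)"
    using sum_if_card[OF fUR, of "\<lambda>r. pat \<pi> (psi n I l r)"] by auto
  also have "card {r \<in> UR n I. pat \<pi> (psi n I l r)} = card {s \<in> (UR n I :: 'a mat set). pat \<pi> s}"
  proof -
    have e: "psi n I l ` {r \<in> UR n I. pat \<pi> (psi n I l r)} = {s \<in> (UR n I :: 'a mat set). pat \<pi> s}"
      using psi_surj[OF I lU] by auto
    have i: "inj_on (psi n I l) {r \<in> UR n I. pat \<pi> (psi n I l r)}"
      using psi_inj[OF I lU] by (rule inj_on_subset) auto
    show ?thesis using card_image[OF i] unfolding e by (rule sym)
  qed
  also have "\<dots> = q ^ card (Pos n I \<inter> \<pi>)"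
    unfolding Mset_pat[OF I] q_def by (rule card_Mset) (simp add: finite_Pos)
  finally have S: "(\<Sum>r\<in>UR n I. (delta n \<pi> (mmul n l r) :: complex)) = (if pat \<pi> l then of_nat q ^ card (Pos n I \<inter> \<pi>) else 0)"
    by simp
  have cUR: "card (UR n I :: 'a mat set) = q ^ card (Pos n I)"
    unfolding UR_Mset[OF I] q_def by (rule card_Mset) (simp add: finite_Pos)
  have cP: "card (Pos n I) = card (Pos n I \<inter> \<pi>) + asc n I \<pi>"
    unfolding asc_Pos by (rule card_Int_Diff[OF finite_Pos])
  have D: "delta (card I) (restr_sh I \<pi>) x * delta (n - card I) (restr_sh ({1..n} - I) \<pi>) y = (if pat \<pi> l then 1 else (0::complex))"
  proof -
    have "delta (card I) (restr_sh I \<pi>) x = (if pat (restr_sh I \<pi>) x then 1 else (0::complex))"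
      using x by (simp add: delta_pat)
    moreover have "delta (n - card I) (restr_sh ({1..n} - I) \<pi>) y = (if pat (restr_sh ({1..n} - I) \<pi>) y then 1 else (0::complex))"
      using y by (simp add: delta_pat)
    ultimately show ?thesis using pat_embed[OF I x y, of \<pi>] unfolding l_def by simp
  qed
  have qc: "(of_nat q :: complex) \<noteq> 0" using q0 by simp
  show ?thesis
  proof (cases "pat \<pi> l")
    case True
    have "(1 / of_nat (card (UR n I :: 'a mat set))) * (\<Sum>r\<in>UR n I. (delta n \<pi> (mmul n l r) :: complex))
       = 1 / (of_nat q ^ (card (Pos n I \<inter> \<pi>) + asc n I \<pi>)) * of_nat q ^ card (Pos n I \<inter> \<pi>)"
      unfolding S cUR cP using True by simp
    also have "\<dots> = (1 / of_nat q) ^ asc n I \<pi>" using qc by (simp add: power_add field_simps)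
    finally show ?thesis unfolding l_def[symmetric] q_def[symmetric] using D True by simp
  next
    case False
    then show ?thesis unfolding l_def[symmetric] q_def[symmetric] S using D by simp
  qed
qed



lemma NO_sub: "\<pi> \<in> NO n \<Longrightarrow> \<pi> \<subseteq> {1..n} \<times> {1..n}" by (simp add: NO_def)
lemma NO_refl: "\<pi> \<in> NO n \<Longrightarrow> i \<in> {1..n} \<Longrightarrow> (i, i) \<in> \<pi>" unfolding NO_def by blast
lemma NO_close0: "\<pi> \<in> NO n \<Longrightarrow> (\<forall>(j, k)\<in>\<pi>. j \<noteq> k \<longrightarrow> (\<forall>i l. 1 \<le> i \<and> i \<le> j \<and> k \<le> l \<and> l \<le> n \<longrightarrow> (i, l) \<in> \<pi>))"
  unfolding NO_def by (drule CollectD) (elim conjE)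
lemma NO_close: "\<pi> \<in> NO n \<Longrightarrow> (j, k) \<in> \<pi> \<Longrightarrow> j \<noteq> k \<Longrightarrow> 1 \<le> i \<Longrightarrow> i \<le> j \<Longrightarrow> k \<le> l \<Longrightarrow> l \<le> n \<Longrightarrow> (i, l) \<in> \<pi>"
  using NO_close0 by fast

lemma conj_eq:
  assumes g: "g \<in> UT n" and h: "h \<in> UT n" and x: "x \<in> UT n" and e: "mmul n h g = mmul n x h"
    and i: "i \<in> {1..n}" and j: "j \<in> {1..n}"
  shows "(\<Sum>k\<in>{1..n}-{j}. h i k * g k j) = (\<Sum>k\<in>{1..n}-{i}. x i k * h k j)"
proof -
  have "mmul n h g i j = h i j + (\<Sum>k\<in>{1..n}-{j}. h i k * g k j)"
    using mmul_split_col[OF j, of h g i] UT_diag[OF g] j by simp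
  moreover have "mmul n x h i j = h i j + (\<Sum>k\<in>{1..n}-{i}. x i k * h k j)"
    using mmul_split[OF i, of x h j] UT_diag[OF x] i by simp
  ultimately show ?thesis using e by simp
qed

lemma conj_pat1:
  assumes P: "\<pi> \<in> NO n" and g: "g \<in> UT n" and h: "h \<in> UT n" and x: "x \<in> UT n" and e: "mmul n h g = mmul n x h"
    and pg: "pat \<pi> g"
  shows "pat \<pi> x"
proof -
  have "\<forall>i j. j - i = d \<longrightarrow> i \<noteq> j \<longrightarrow> x i j \<noteq> 0 \<longrightarrow> (i, j) \<in> \<pi>" for d
  proof (induction d rule: less_induct)
    case (less d)
    show ?case
    proof (intro allI impI)
      fix i j assume d: "j - i = d" and ne: "i \<noteq> j" and nz: "x i j \<noteq> 0"
      have ij: "1 \<le> i" "i < j" "j \<le> n" using UT_nz[OF x nz] ne by auto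
      then have iN: "i \<in> {1..n}" and jN: "j \<in> {1..n}" by auto
      show "(i, j) \<in> \<pi>"
      proof (rule ccontr)
        assume nin: "(i, j) \<notin> \<pi>"
        have L: "(\<Sum>k\<in>{1..n}-{j}. h i k * g k j) = 0"
        proof (rule sum.neutral, rule ballI)
          fix k assume k: "k \<in> {1..n}-{j}"
          show "h i k * g k j = 0"
          proof (rule ccontr)
            assume "h i k * g k j \<noteq> 0"
            then have hk: "h i k \<noteq> 0" and gk: "g k j \<noteq> 0" by auto
            have "i \<le> k" using UT_nz[OF h hk] by simp
            have kj0: "k \<noteq> j" using k by simp
            have kj: "(k, j) \<in> \<pi>" using pg[unfolded pat_def, rule_format, OF kj0 gk] .
            have "(i, j) \<in> \<pi>" using NO_close[OF P kj kj0 ij(1) \<open>i \<le> k\<close> order_refl ij(3)] .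
            then show False using nin by simp
          qed
        qed
        have R0: "(\<Sum>k\<in>{1..n}-{i}-{j}. x i k * h k j) = 0"
        proof (rule sum.neutral, rule ballI)
          fix k assume k: "k \<in> {1..n}-{i}-{j}"
          show "x i k * h k j = 0"
          proof (rule ccontr)
            assume "x i k * h k j \<noteq> 0"
            then have xk: "x i k \<noteq> 0" and hk: "h k j \<noteq> 0" by auto
            have "i < k" "k < j" using UT_nz[OF x xk] UT_nz[OF h hk] k by auto
            then have lt: "k - i < d" using d by simp
            have ik: "(i, k) \<in> \<pi>" using less[of "k - i", rule_format, OF lt refl] xk \<open>i < k\<close> by simp
            have "(i, j) \<in> \<pi>" using NO_close[OF P ik _ ij(1) order_refl _ ij(3)] \<open>i < k\<close> \<open>k < j\<close> by simp
            then show False using nin by simp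
          qed
        qed
        have "(\<Sum>k\<in>{1..n}-{i}. x i k * h k j) = x i j * h j j + (\<Sum>k\<in>{1..n}-{i}-{j}. x i k * h k j)"
          using jN ne by (subst sum.remove[of _ j]) auto
        then have "(\<Sum>k\<in>{1..n}-{i}. x i k * h k j) = x i j" using R0 UT_diag[OF h] jN by simp
        then have "x i j = 0" using conj_eq[OF g h x e iN jN] L by simp
        then show False using nz by simp
      qed
    qed
  qed
  then show ?thesis unfolding pat_def by blast
qed

lemma conj_pat2:
  assumes P: "\<pi> \<in> NO n" and g: "g \<in> UT n" and h: "h \<in> UT n" and x: "x \<in> UT n" and e: "mmul n h g = mmul n x h"
    and px: "pat \<pi> x"
  shows "pat \<pi> g"
proof -
  have "\<forall>i j. j - i = d \<longrightarrow> i \<noteq> j \<longrightarrow> g i j \<noteq> 0 \<longrightarrow> (i, j) \<in> \<pi>" for d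
  proof (induction d rule: less_induct)
    case (less d)
    show ?case
    proof (intro allI impI)
      fix i j assume d: "j - i = d" and ne: "i \<noteq> j" and nz: "g i j \<noteq> 0"
      have ij: "1 \<le> i" "i < j" "j \<le> n" using UT_nz[OF g nz] ne by auto
      then have iN: "i \<in> {1..n}" and jN: "j \<in> {1..n}" by auto
      show "(i, j) \<in> \<pi>"
      proof (rule ccontr)
        assume nin: "(i, j) \<notin> \<pi>"
        have R: "(\<Sum>k\<in>{1..n}-{i}. x i k * h k j) = 0"
        proof (rule sum.neutral, rule ballI)
          fix k assume k: "k \<in> {1..n}-{i}"
          show "x i k * h k j = 0"
          proof (rule ccontr)
            assume "x i k * h k j \<noteq> 0"
            then have xk: "x i k \<noteq> 0" and hk: "h k j \<noteq> 0" by auto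
            have "k \<le> j" using UT_nz[OF h hk] by simp
            have ki: "i \<noteq> k" using k by simp
            have ik: "(i, k) \<in> \<pi>" using px[unfolded pat_def, rule_format, OF ki xk] .
            have "(i, j) \<in> \<pi>" using NO_close[OF P ik ki ij(1) order_refl \<open>k \<le> j\<close> ij(3)] .
            then show False using nin by simp
          qed
        qed
        have L0: "(\<Sum>k\<in>{1..n}-{j}-{i}. h i k * g k j) = 0"
        proof (rule sum.neutral, rule ballI)
          fix k assume k: "k \<in> {1..n}-{j}-{i}"
          show "h i k * g k j = 0"
          proof (rule ccontr)
            assume "h i k * g k j \<noteq> 0"
            then have hk: "h i k \<noteq> 0" and gk: "g k j \<noteq> 0" by auto
            have "i < k" "k < j" using UT_nz[OF h hk] UT_nz[OF g gk] k by auto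
            then have lt: "j - k < d" using d by simp
            have kj: "(k, j) \<in> \<pi>" using less[of "j - k", rule_format, OF lt refl] gk \<open>k < j\<close> by simp
            have "(i, j) \<in> \<pi>" using NO_close[OF P kj _ ij(1) _ order_refl ij(3)] \<open>i < k\<close> \<open>k < j\<close> by simp
            then show False using nin by simp
          qed
        qed
        have "(\<Sum>k\<in>{1..n}-{j}. h i k * g k j) = h i i * g i j + (\<Sum>k\<in>{1..n}-{j}-{i}. h i k * g k j)"
          using iN ne by (subst sum.remove[of _ i]) auto
        then have "(\<Sum>k\<in>{1..n}-{j}. h i k * g k j) = g i j" using L0 UT_diag[OF h] iN by simp
        then have "g i j = 0" using conj_eq[OF g h x e iN jN] R by simp
        then show False using nz by simp
      qed
    qed
  qed
  then show ?thesis unfolding pat_def by blast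
qed

lemma delta_cf: "\<pi> \<in> NO n \<Longrightarrow> (delta n \<pi> :: 'a::field mat \<Rightarrow> complex) \<in> cf n"
  unfolding cf_def
proof (intro CollectI conjI allI impI ballI)
  fix g :: "'a mat" assume "g \<notin> UT n" then show "delta n \<pi> g = 0" by (simp add: delta_pat)
next
  fix g h x :: "'a mat" assume P: "\<pi> \<in> NO n" and g: "g \<in> UT n" and h: "h \<in> UT n" and x: "x \<in> UT n"
    and e: "mmul n h g = mmul n x h"
  have "pat \<pi> g \<longleftrightarrow> pat \<pi> x" using conj_pat1[OF P g h x e] conj_pat2[OF P g h x e] by blast
  then show "delta n \<pi> g = delta n \<pi> x" using g x by (simp add: delta_pat)
qed



lemma cano_Icc: "i \<le> n \<Longrightarrow> cano {1..n} i = i"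
proof -
  assume "i \<le> n"
  then have "{k \<in> {1..n}. k \<le> i} = {1..i}" by auto
  then show ?thesis unfolding cano_def by simp
qed

lemma cano_shift: "n < i \<Longrightarrow> i \<le> N \<Longrightarrow> cano ({1..N} - {1..n}) i = i - n"
proof -
  assume "n < i" "i \<le> N"
  then have "{k \<in> {1..N} - {1..n}. k \<le> i} = {Suc n..i}" by auto
  then show ?thesis unfolding cano_def by simp
qed

lemma embed_ord:
  "embed (n + m) {1..n} x y i j =
    (if i \<in> {1..n} \<and> j \<in> {1..n} then x i j
     else if n < i \<and> i \<le> n + m \<and> n < j \<and> j \<le> n + m then y (i - n) (j - n) else 0)"
  unfolding embed_def using cano_Icc[of _ n] cano_shift[of n _ "n + m"] by (auto simp del: One_nat_def)

lemma triple_sum: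
  assumes "finite A" "finite B" "finite C" "a0 \<in> A" "b0 \<in> B" "c0 \<in> C"
  shows "(\<Sum>a\<in>A. \<Sum>b\<in>B. \<Sum>c\<in>C. if a = a0 \<and> b = b0 \<and> c = c0 then v else 0) = v"
proof -
  have 1: "(\<Sum>c\<in>C. if a = a0 \<and> b = b0 \<and> c = c0 then v else 0) = (if a = a0 \<and> b = b0 then v else 0)" for a b
    by (cases "a = a0 \<and> b = b0") (use assms in auto)
  have 2: "(\<Sum>b\<in>B. if a = a0 \<and> b = b0 then v else 0) = (if a = a0 then v else 0)" for a
    by (cases "a = a0") (use assms in auto)
  show ?thesis unfolding 1 2 using assms by simp
qed

lemma os_mem:
  assumes R: "\<rho> \<subseteq> {1..m} \<times> {1..m}"
  shows "(i, j) \<in> ordsum n m \<pi> \<rho> \<longleftrightarrow>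
     (i, j) \<in> \<pi> \<or> (n < i \<and> n < j \<and> (i - n, j - n) \<in> \<rho>) \<or> (i \<in> {1..n} \<and> n < j \<and> j \<le> n + m)"
proof -
  have "(i, j) \<in> {(a + n, b + n) | a b. (a, b) \<in> \<rho>} \<longleftrightarrow> (n < i \<and> n < j \<and> (i - n, j - n) \<in> \<rho>)"
  proof
    assume "(i, j) \<in> {(a + n, b + n) | a b. (a, b) \<in> \<rho>}"
    then obtain a b where "i = a + n" "j = b + n" "(a, b) \<in> \<rho>" by blast
    moreover then have "1 \<le> a" "1 \<le> b" using R by auto
    ultimately show "n < i \<and> n < j \<and> (i - n, j - n) \<in> \<rho>" by simp
  next
    assume a: "n < i \<and> n < j \<and> (i - n, j - n) \<in> \<rho>"
    then have "i = (i - n) + n" "j = (j - n) + n" by auto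
    then show "(i, j) \<in> {(a + n, b + n) | a b. (a, b) \<in> \<rho>}" using a by blast
  qed
  then show ?thesis unfolding ordsum_def by auto
qed

lemma pat_ordsum:
  fixes g :: "'a::field mat"
  assumes P: "\<pi> \<subseteq> {1..n} \<times> {1..n}" and R: "\<rho> \<subseteq> {1..m} \<times> {1..m}" and g: "g \<in> UT (n + m)"
  defines "x0 \<equiv> (\<lambda>i j. if i \<in> {1..n} \<and> j \<in> {1..n} then g i j else 0)"
  defines "y0 \<equiv> (\<lambda>i j. if i \<in> {1..m} \<and> j \<in> {1..m} then g (i + n) (j + n) else 0)"
  shows "pat (ordsum n m \<pi> \<rho>) g \<longleftrightarrow> pat \<pi> x0 \<and> pat \<rho> y0"
proof
  assume O: "pat (ordsum n m \<pi> \<rho>) g"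
  show "pat \<pi> x0 \<and> pat \<rho> y0" unfolding pat_def
  proof (intro conjI allI impI)
    fix i j assume ne: "i \<noteq> j" and nz: "x0 i j \<noteq> 0"
    then have ij: "i \<in> {1..n}" "j \<in> {1..n}" "g i j \<noteq> 0" unfolding x0_def by (auto split: if_splits)
    then have "(i, j) \<in> ordsum n m \<pi> \<rho>" using O ne unfolding pat_def by blast
    then show "(i, j) \<in> \<pi>" using os_mem[OF R] ij by auto
  next
    fix i j assume ne: "i \<noteq> j" and nz: "y0 i j \<noteq> 0"
    then have ij: "i \<in> {1..m}" "j \<in> {1..m}" "g (i + n) (j + n) \<noteq> 0" unfolding y0_def by (auto split: if_splits)
    have "i + n \<noteq> j + n" using ne by simp
    then have "(i + n, j + n) \<in> ordsum n m \<pi> \<rho>" using O ij(3) unfolding pat_def by blast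
    then show "(i, j) \<in> \<rho>" using os_mem[OF R] ij P by auto
  qed
next
  assume Q: "pat \<pi> x0 \<and> pat \<rho> y0"
  show "pat (ordsum n m \<pi> \<rho>) g" unfolding pat_def
  proof (intro allI impI)
    fix i j assume ne: "i \<noteq> j" and nz: "g i j \<noteq> 0"
    have ij: "1 \<le> i" "i \<le> j" "j \<le> n + m" using UT_nz[OF g nz] by auto
    show "(i, j) \<in> ordsum n m \<pi> \<rho>"
    proof (cases "j \<le> n")
      case True
      then have "x0 i j \<noteq> 0" using ij nz unfolding x0_def by auto
      then have "(i, j) \<in> \<pi>" using Q ne unfolding pat_def by blast
      then show ?thesis using os_mem[OF R] by auto
    next
      case False
      show ?thesis
      proof (cases "n < i")
        case True
        then have "y0 (i - n) (j - n) \<noteq> 0" using ij nz False unfolding y0_def by auto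
        moreover have "i - n \<noteq> j - n" using ne True False by auto
        ultimately have "(i - n, j - n) \<in> \<rho>" using Q unfolding pat_def by blast
        then show ?thesis using os_mem[OF R] True False by auto
      next
        case F2: False
        then show ?thesis using os_mem[OF R] False ij by auto
      qed
    qed
  qed
qed


lemma mult_delta:
  fixes g :: "'a::{finite,field} mat"
  assumes P: "\<pi> \<in> NO n" and R: "\<rho> \<in> NO m"
  shows "cf_mult n m (\<lambda>x y. (delta n \<pi> x :: complex) * delta m \<rho> y) g = delta (n + m) (ordsum n m \<pi> \<rho>) g"
proof -
  let ?N = "n + m" and ?I = "{1..n}"
  have I: "?I \<subseteq> {1..?N}" by auto
  have cI: "card ?I = n" by simp
  have eU: "embed ?N ?I x y \<in> UT ?N" "BD (embed ?N ?I x y) ?I" if "x \<in> UT n" "y \<in> UT m" for x y :: "'a mat"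
    using embed_UT[OF I, of x y] that by simp_all
  have fA: "finite (UT n :: 'a mat set)" "finite (UT m :: 'a mat set)" "finite (UR ?N ?I :: 'a mat set)"
    by (simp_all add: finite_UT finite_UR)
  show ?thesis
  proof (cases "g \<in> UT ?N")
    case False
    have "cf_mult n m (\<lambda>x y. (delta n \<pi> x :: complex) * delta m \<rho> y) g = 0"
      unfolding cf_mult_def
    proof (intro sum.neutral ballI)
      fix x y r :: "'a mat" assume x: "x \<in> UT n" and y: "y \<in> UT m" and r: "r \<in> UR ?N ?I"
      have "mmul ?N (embed ?N ?I x y) r \<in> UT ?N" by (rule mmul_UT[OF eU(1)[OF x y] UR_UT[OF r]])
      then show "(if g = mmul ?N (embed ?N ?I x y) r then delta n \<pi> x * delta m \<rho> y else 0) = (0::complex)"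
        using False by auto
    qed
    then show ?thesis using False by (simp add: delta_pat)
  next
    case True
    note g = True
    define x0 where "x0 = (\<lambda>i j. if i \<in> {1..n} \<and> j \<in> {1..n} then g i j else 0)"
    define y0 where "y0 = (\<lambda>i j. if i \<in> {1..m} \<and> j \<in> {1..m} then g (i + n) (j + n) else 0)"
    have x0: "x0 \<in> UT n"
    proof (rule UT_I)
      fix i j assume "x0 i j \<noteq> 0" then show "1 \<le> i \<and> i \<le> j \<and> j \<le> n"
        using UT_nz[OF g, of i j] unfolding x0_def by (auto split: if_splits)
    next
      fix i assume "1 \<le> i" "i \<le> n" then show "x0 i i = 1" using UT_diag[OF g, of i] unfolding x0_def by auto
    qed
    have y0: "y0 \<in> UT m"
    proof (rule UT_I)
      fix i j assume "y0 i j \<noteq> 0" then show "1 \<le> i \<and> i \<le> j \<and> j \<le> m"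
        using UT_nz[OF g, of "i + n" "j + n"] unfolding y0_def by (auto split: if_splits)
    next
      fix i assume "1 \<le> i" "i \<le> m" then show "y0 i i = 1" using UT_diag[OF g, of "i + n"] unfolding y0_def by auto
    qed
    define l0 where "l0 = embed ?N ?I x0 y0"
    have l0U: "l0 \<in> UT ?N" "BD l0 ?I" using eU[OF x0 y0] unfolding l0_def by auto
    have gl: "l0 i j = g i j" if nb: "\<not> (i \<in> ?I \<and> j \<in> {1..?N} - ?I)" for i j
    proof (cases "g i j = 0")
      case False
      then have ij: "1 \<le> i" "i \<le> j" "j \<le> ?N" using UT_nz[OF g] by blast+
      show ?thesis
      proof (cases "i \<le> n")
        case True
        then have "j \<le> n" using nb ij by auto
        then show ?thesis using True ij unfolding l0_def embed_ord x0_def by auto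
      next
        case F: False
        then show ?thesis using ij unfolding l0_def embed_ord y0_def by auto
      qed
    next
      case True
      then show ?thesis unfolding l0_def embed_ord x0_def y0_def by auto
    qed
    define s :: "'a mat" where "s = (\<lambda>i j. if i \<in> ?I \<and> j \<in> {1..?N} - ?I then g i j else idm ?N i j)"
    have sM: "s \<in> Mset ?N (Pos ?N ?I)" unfolding Mset_def
    proof (intro CollectI allI impI)
      fix i j assume ij: "(i, j) \<notin> Pos ?N ?I"
      show "s i j = idm ?N i j"
      proof (cases "i \<in> ?I \<and> j \<in> {1..?N} - ?I")
        case True
        then have "\<not> i < j" "i \<noteq> j" using ij unfolding Pos_def by auto
        then have "g i j = 0" using UT_nz[OF g, of i j] by linarith
        then show ?thesis using True \<open>i \<noteq> j\<close> unfolding s_def idm_def by simp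
      next
        case False
        show ?thesis unfolding s_def by (rule if_not_P[OF False])
      qed
    qed
    then have sU: "s \<in> UR ?N ?I" using UR_Mset[OF I] by blast
    then obtain r0 where r0: "r0 \<in> UR ?N ?I" "psi ?N ?I l0 r0 = s"
      using psi_surj[OF I l0U(1)] by (metis imageE)
    have g0: "mmul ?N l0 r0 = g"
    proof (intro ext)
      fix i j
      show "mmul ?N l0 r0 i j = g i j"
      proof (cases "i \<in> ?I \<and> j \<in> {1..?N} - ?I")
        case True
        then show ?thesis unfolding mmul_psi[OF I l0U r0(1)] r0(2) s_def by simp
      next
        case False
        have "mmul ?N l0 r0 i j = l0 i j" unfolding mmul_psi[OF I l0U r0(1)] by (rule if_not_P[OF False])
        then show ?thesis using gl[OF False] by simp
      qed
    qed
    have key: "g = mmul ?N (embed ?N ?I x y) r \<longleftrightarrow> x = x0 \<and> y = y0 \<and> r = r0"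
      if x: "x \<in> UT n" and y: "y \<in> UT m" and r: "r \<in> UR ?N ?I" for x y r
    proof
      assume e: "g = mmul ?N (embed ?N ?I x y) r"
      have nb: "g i j = embed ?N ?I x y i j" if "\<not> (i \<in> ?I \<and> j \<in> {1..?N} - ?I)" for i j
        unfolding e using mmul_nonblk[OF eU[OF x y] r that] .
      have xx: "x = x0"
      proof (intro ext)
        fix i j show "x i j = x0 i j"
        proof (cases "i \<in> {1..n} \<and> j \<in> {1..n}")
          case True
          then have "g i j = x i j" using nb[of i j] unfolding embed_ord by auto
          then show ?thesis using True unfolding x0_def by simp
        next
          case False
          then show ?thesis using UT_zero[OF x, of i j] unfolding x0_def by auto
        qed
      qed
      have yy: "y = y0"
      proof (intro ext)
        fix i j show "y i j = y0 i j"
        proof (cases "i \<in> {1..m} \<and> j \<in> {1..m}")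
          case True
          then have "g (i + n) (j + n) = y i j" using nb[of "i + n" "j + n"] unfolding embed_ord by auto
          then show ?thesis using True unfolding y0_def by simp
        next
          case False
          then show ?thesis using UT_zero[OF y, of i j] unfolding y0_def by auto
        qed
      qed
      have "psi ?N ?I l0 r = psi ?N ?I l0 r0"
      proof (intro ext)
        fix i j
        show "psi ?N ?I l0 r i j = psi ?N ?I l0 r0 i j"
        proof (cases "i \<in> ?I \<and> j \<in> {1..?N} - ?I")
          case True
          then show ?thesis unfolding psi_def using e g0 xx yy l0_def by simp
        next
          case False
          then have "(i, j) \<notin> Pos ?N ?I" unfolding Pos_def by blast
          then have "r i j = idm ?N i j" "r0 i j = idm ?N i j"
            using r r0(1) UR_Mset[OF I] unfolding Mset_def by blast+
          moreover have "psi ?N ?I l0 r i j = r i j" "psi ?N ?I l0 r0 i j = r0 i j"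
            unfolding psi_def by (rule if_not_P[OF False])+
          ultimately show ?thesis by simp
        qed
      qed
      then have "r = r0" using inj_onD[OF psi_inj[OF I l0U(1)] _ r r0(1)] by blast
      then show "x = x0 \<and> y = y0 \<and> r = r0" using xx yy by simp
    next
      assume "x = x0 \<and> y = y0 \<and> r = r0"
      then show "g = mmul ?N (embed ?N ?I x y) r" using g0 unfolding l0_def by simp
    qed
    have "cf_mult n m (\<lambda>x y. (delta n \<pi> x :: complex) * delta m \<rho> y) g
        = (\<Sum>x\<in>UT n. \<Sum>y\<in>UT m. \<Sum>r\<in>UR ?N ?I. if x = x0 \<and> y = y0 \<and> r = r0 then delta n \<pi> x0 * delta m \<rho> y0 else 0)"
      unfolding cf_mult_def
    proof (intro sum.cong refl)
      fix x y r :: "'a mat" assume x: "x \<in> UT n" and y: "y \<in> UT m" and r: "r \<in> UR ?N ?I"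
      show "(if g = mmul ?N (embed ?N ?I x y) r then (delta n \<pi> x :: complex) * delta m \<rho> y else 0) =
            (if x = x0 \<and> y = y0 \<and> r = r0 then delta n \<pi> x0 * delta m \<rho> y0 else 0)"
        unfolding key[OF x y r] by auto
    qed
    also have "\<dots> = delta n \<pi> x0 * delta m \<rho> y0"
      by (rule triple_sum[OF fA x0 y0 r0(1)])
    also have "\<dots> = delta (n + m) (ordsum n m \<pi> \<rho>) g"
      using pat_ordsum[OF NO_sub[OF P] NO_sub[OF R] g] x0 y0 g unfolding x0_def y0_def
      by (simp add: delta_pat)
    finally show ?thesis .
  qed
qed



lemma NO_le: "\<pi> \<in> NO n \<Longrightarrow> (i, j) \<in> \<pi> \<Longrightarrow> i \<le> j"
proof -
  assume P: "\<pi> \<in> NO n" and ij: "(i, j) \<in> \<pi>"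
  have "\<forall>(i, j)\<in>\<pi>. i \<le> j" using P unfolding NO_def by (elim CollectE conjE) assumption
  then show ?thesis using ij by blast
qed

lemma finite_NO: "finite (NO n)"
proof -
  have "NO n \<subseteq> Pow ({1..n} \<times> {1..n})" using NO_sub by blast
  then show ?thesis by (rule finite_subset) simp
qed

lemma delta_indep:
  fixes d :: "(nat \<times> nat) set \<Rightarrow> complex"
  assumes Z: "\<And>g::'a::field mat. (\<Sum>\<pi>\<in>NO n. d \<pi> * delta n \<pi> g) = 0"
  shows "\<forall>\<pi>\<in>NO n. d \<pi> = 0"
proof (rule ccontr)
  assume "\<not> (\<forall>\<pi>\<in>NO n. d \<pi> = 0)"
  then have Sne: "{\<pi> \<in> NO n. d \<pi> \<noteq> 0} \<noteq> {}" by blast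
  define S where "S = {\<pi> \<in> NO n. d \<pi> \<noteq> 0}"
  have fS: "finite S" unfolding S_def using finite_NO by simp
  define M where "M = Max (card ` S)"
  have "M \<in> card ` S" unfolding M_def using fS Sne S_def by (intro Max_in) auto
  then obtain \<pi>0 where p0: "\<pi>0 \<in> S" "card \<pi>0 = M" by blast
  have Mge: "card \<rho> \<le> M" if "\<rho> \<in> S" for \<rho> unfolding M_def using fS that by (intro Max_ge) auto
  have P0: "\<pi>0 \<in> NO n" and d0: "d \<pi>0 \<noteq> 0" using p0 unfolding S_def by auto
  define g0 :: "'a mat" where "g0 = (\<lambda>i j. if (i, j) \<in> \<pi>0 then 1 else 0)"
  have g0U: "g0 \<in> UT n"
  proof (rule UT_I)
    fix i j assume "g0 i j \<noteq> 0"
    then have "(i, j) \<in> \<pi>0" unfolding g0_def by (auto split: if_splits)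
    then show "1 \<le> i \<and> i \<le> j \<and> j \<le> n" using NO_sub[OF P0] NO_le[OF P0] by auto
  next
    fix i assume "1 \<le> i" "i \<le> n" then show "g0 i i = 1" using NO_refl[OF P0, of i] unfolding g0_def by auto
  qed
  have dg: "delta n \<rho> g0 = (if \<pi>0 \<subseteq> \<rho> then 1 else 0)" if R: "\<rho> \<in> NO n" for \<rho>
  proof -
    have "pat \<rho> g0 \<longleftrightarrow> \<pi>0 \<subseteq> \<rho>"
    proof
      assume pr: "pat \<rho> g0"
      show "\<pi>0 \<subseteq> \<rho>"
      proof
        fix p assume p: "p \<in> \<pi>0"
        obtain i j where pij: "p = (i, j)" by (cases p)
        show "p \<in> \<rho>"
        proof (cases "i = j")
          case True
          then have "i \<in> {1..n}" using NO_sub[OF P0] p pij by auto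
          then show ?thesis using NO_refl[OF R] True pij by simp
        next
          case False
          have "g0 i j \<noteq> 0" using p pij unfolding g0_def by simp
          then show ?thesis using pr False pij unfolding pat_def by blast
        qed
      qed
    next
      assume "\<pi>0 \<subseteq> \<rho>"
      then show "pat \<rho> g0" unfolding pat_def g0_def by auto
    qed
    then show ?thesis using g0U by (simp add: delta_pat)
  qed
  have "(\<Sum>\<rho>\<in>NO n. d \<rho> * delta n \<rho> g0) = (\<Sum>\<rho>\<in>NO n. if \<rho> = \<pi>0 then d \<pi>0 else 0)"
  proof (rule sum.cong[OF refl])
    fix \<rho> assume R: "\<rho> \<in> NO n"
    show "d \<rho> * delta n \<rho> g0 = (if \<rho> = \<pi>0 then d \<pi>0 else 0)"
    proof (cases "\<rho> = \<pi>0")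
      case True then show ?thesis using dg[OF R] by simp
    next
      case False
      show ?thesis
      proof (cases "\<pi>0 \<subseteq> \<rho>")
        case True
        then have "\<pi>0 \<subset> \<rho>" using False by blast
        moreover have "finite \<rho>" using NO_sub[OF R] by (rule finite_subset) simp
        ultimately have "card \<pi>0 < card \<rho>" by (rule psubset_card_mono[rotated])
        then have "\<rho> \<notin> S" using Mge p0(2) by force
        then have "d \<rho> = 0" using R unfolding S_def by simp
        then show ?thesis using False by simp
      next
        case F2: False
        then show ?thesis using dg[OF R] False by simp
      qed
    qed
  qed
  also have "\<dots> = d \<pi>0" using P0 finite_NO by simp
  finally show False using Z[of g0] d0 by simp
qed

lemma phi_inj: "inj_on (phi :: _ \<Rightarrow> nat \<Rightarrow> 'a::field mat \<Rightarrow> complex) IG_elems"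
proof (rule inj_onI)
  fix c c' assume c: "c \<in> IG_elems" and c': "c' \<in> IG_elems" and e: "(phi c :: nat \<Rightarrow> 'a mat \<Rightarrow> complex) = phi c'"
  show "c = c'"
  proof (rule ext)
    fix k :: "nat \<times> (nat \<times> nat) set"
    obtain n \<pi> where k: "k = (n, \<pi>)" by (cases k)
    show "c k = c' k"
    proof (cases "\<pi> \<in> NO n")
      case False
      then have "c k = 0" "c' k = 0" using c c' k unfolding IG_elems_def by auto
      then show ?thesis by simp
    next
      case True
      have "(\<Sum>\<rho>\<in>NO n. (c (n, \<rho>) - c' (n, \<rho>)) * delta n \<rho> g) = 0" for g :: "'a mat"
      proof -
        have "phi c n g = phi c' n g" using e by simp
        then show ?thesis unfolding phi_def by (simp add: left_diff_distrib sum_subtractf)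
      qed
      then have "\<forall>\<rho>\<in>NO n. c (n, \<rho>) - c' (n, \<rho>) = 0" by (rule delta_indep)
      then show ?thesis using True k by simp
    qed
  qed
qed

theorem theorem7p5:
  fixes q :: nat
  defines "q \<equiv> card (UNIV :: ('a::{finite,field}) set)"
  shows
    \<comment> \<open>the map lands in cf(UT_bullet)\<close>
    "(\<forall>n. \<forall>\<pi>\<in>NO n. (delta n \<pi> :: 'a mat \<Rightarrow> complex) \<in> cf n)
     \<comment> \<open>unit\<close>
     \<and> (\<forall>\<pi>\<in>NO 0. (delta 0 \<pi> :: 'a mat \<Rightarrow> complex) = (\<lambda>g. if g \<in> UT 0 then 1 else 0))
     \<comment> \<open>counit\<close>
     \<and> (\<forall>\<pi>\<in>NO 0. (delta 0 \<pi> :: 'a mat \<Rightarrow> complex) (\<lambda>i j. 0) = 1)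
     \<comment> \<open>multiplicativity\<close>
     \<and> (\<forall>n m \<pi> \<rho>. \<pi> \<in> NO n \<longrightarrow> \<rho> \<in> NO m \<longrightarrow>
          cf_mult n m (\<lambda>x y. (delta n \<pi> :: 'a mat \<Rightarrow> complex) x * delta m \<rho> y)
          = delta (n + m) (ordsum n m \<pi> \<rho>))
     \<comment> \<open>comultiplicativity, componentwise in cf(UT_a) (x) cf(UT_(n-a))\<close>
     \<and> (\<forall>n a \<pi>. \<pi> \<in> NO n \<longrightarrow> a \<le> n \<longrightarrow>
          (\<forall>x\<in>UT a. \<forall>y\<in>UT (n - a).
             cf_coprod n a (delta n \<pi> :: 'a mat \<Rightarrow> complex) x y
             = (\<Sum>I\<in>{I. I \<subseteq> {1..n} \<and> card I = a}.
                  (1 / of_nat q) ^ asc n I \<pi> *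
                  delta a (restr_sh I \<pi>) x * delta (n - a) (restr_sh ({1..n} - I) \<pi>) y)))
     \<comment> \<open>injectivity\<close>
     \<and> inj_on (phi :: _ \<Rightarrow> nat \<Rightarrow> 'a mat \<Rightarrow> complex) IG_elems"
proof (intro conjI allI ballI impI)
  fix n \<pi> assume "\<pi> \<in> NO n"
  then show "(delta n \<pi> :: 'a mat \<Rightarrow> complex) \<in> cf n" by (rule delta_cf)
next
  fix \<pi> :: "(nat \<times> nat) set"
  show "(delta 0 \<pi> :: 'a mat \<Rightarrow> complex) = (\<lambda>g. if g \<in> UT 0 then 1 else 0)"
  proof (rule ext)
    fix g :: "'a mat"
    have "g \<in> UT 0 \<Longrightarrow> pat \<pi> g" unfolding pat_def using UT_nz[of g 0] by fastforce
    then show "delta 0 \<pi> g = (if g \<in> UT 0 then 1 else 0)" by (auto simp: delta_pat)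
  qed
next
  fix \<pi> :: "(nat \<times> nat) set"
  have "((\<lambda>i j. 0) :: 'a mat) \<in> UT 0" by (rule UT_I) auto
  moreover have "pat \<pi> ((\<lambda>i j. 0) :: 'a mat)" unfolding pat_def by simp
  ultimately show "(delta 0 \<pi> :: 'a mat \<Rightarrow> complex) (\<lambda>i j. 0) = 1" by (simp add: delta_pat)
next
  fix n m \<pi> \<rho> assume "\<pi> \<in> NO n" "\<rho> \<in> NO m"
  then show "cf_mult n m (\<lambda>x y. (delta n \<pi> :: 'a mat \<Rightarrow> complex) x * delta m \<rho> y) = delta (n + m) (ordsum n m \<pi> \<rho>)"
    using mult_delta by blast
next
  fix n a \<pi> x y assume "\<pi> \<in> NO n" "a \<le> n" and x: "x \<in> (UT a :: 'a mat set)" and y: "y \<in> (UT (n - a) :: 'a mat set)"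
  show "cf_coprod n a (delta n \<pi> :: 'a mat \<Rightarrow> complex) x y
             = (\<Sum>I\<in>{I. I \<subseteq> {1..n} \<and> card I = a}.
                  (1 / of_nat q) ^ asc n I \<pi> *
                  delta a (restr_sh I \<pi>) x * delta (n - a) (restr_sh ({1..n} - I) \<pi>) y)"
    unfolding cf_coprod_def
  proof (rule sum.cong[OF refl])
    fix I assume "I \<in> {I. I \<subseteq> {1..n} \<and> card I = a}"
    then have I: "I \<subseteq> {1..n}" and cI: "card I = a" by auto
    show "1 / of_nat (card (UR n I :: 'a mat set)) * (\<Sum>r\<in>UR n I. delta n \<pi> (mmul n (embed n I x y) r))
      = (1 / of_nat q) ^ asc n I \<pi> * delta a (restr_sh I \<pi>) x * delta (n - a) (restr_sh ({1..n} - I) \<pi>) y"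
      using coprod_term[OF I, of x y \<pi>] x y cI unfolding q_def by simp
  qed
next
  show "inj_on (phi :: _ \<Rightarrow> nat \<Rightarrow> 'a mat \<Rightarrow> complex) IG_elems" by (rule phi_inj)
qed


end
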